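(* Let $k\in\mathbb{Z}$ and $\imath\in\mathbb{Z}_{>1}$. The rational polygon $\mathrm{conv}((0,0),(k,\imath),(k+1/3,\imath))$ is canonical if and only if either $k+1$ is a multiple of $\imath$, or $\imath$ is odd and $k\equiv\frac{\imath-1}{2}\bmod\imath$.
   Context: For rationals $a<b$ and $\imath\in\mathbb{Z}_{>1}$, the polygon $\mathrm{conv}((0,0),(a,\imath),(b,\imath))$ is called canonical if every lattice point $p\neq(0,0)$ in it satisfies $p_2=\imath$. *)

theory Defs
  imports "HOL-Analysis.Analysis"
begin

definition tri :: "rat \<Rightarrow> rat \<Rightarrow> int \<Rightarrow> (real \<times> real) set" where
  "tri a b i = convex hull {(0, 0), (of_rat a, of_int i), (of_rat b, of_int i)}"

definition canonical :: "rat \<Rightarrow> rat \<Rightarrow> int \<Rightarrow> bool" where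
  "canonical a b i \<longleftrightarrow>
     (\<forall>x y :: int. (of_int x, of_int y) \<in> tri a b i \<and> (x, y) \<noteq> (0, 0) \<longrightarrow> y = i)"

end

theory Submission
  imports Defs
begin

lemma tri_mem:
  fixes k i x y :: int
  assumes "i > 1"
  shows "(real_of_int x, real_of_int y) \<in> tri (of_int k) (of_int k + 1/3) i \<longleftrightarrow>
     0 \<le> y \<and> y \<le> i \<and> 0 \<le> x*i - k*y \<and> 3*(x*i - k*y) \<le> y"
proof -
  have r: "(of_rat (of_int k + 1/3) :: real) = of_int k + 1/3"
    by (simp add: of_rat_add of_rat_divide)
  have hull: "tri (of_int k) (of_int k + 1/3) i =
     {(0,0) + u *\<^sub>R ((real_of_int k, real_of_int i) - (0,0)) + v *\<^sub>R ((real_of_int k + 1/3, real_of_int i) - (0,0)) | u v. 0 \<le> u \<and> 0 \<le> v \<and> u + v \<le> 1}"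
    unfolding tri_def r by (simp add: convex_hull_3_alt)
  have ip: "real_of_int i > 1" using assms by simp
  show ?thesis
  proof
    assume "(real_of_int x, real_of_int y) \<in> tri (of_int k) (of_int k + 1/3) i"
    then obtain u v :: real where uv: "0 \<le> u" "0 \<le> v" "u + v \<le> 1"
      and ex: "real_of_int x = u * k + v * (k + 1/3)" and ey: "real_of_int y = u * i + v * i"
      unfolding hull by auto
    have y1: "real_of_int y \<ge> 0" using ey uv ip by simp
    have y2: "real_of_int y \<le> real_of_int i" using ey uv ip
      by (metis distrib_right mult_left_le_one_le less_le_not_le order.strict_trans zero_less_one add_nonneg_nonneg)
    have e: "real_of_int (x*i - k*y) = v * i / 3"
      using ex ey by (simp add: algebra_simps)
    have e1: "real_of_int (x*i - k*y) \<ge> 0" unfolding e using uv ip by simp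
    have e2: "3 * real_of_int (x*i - k*y) \<le> real_of_int y"
      unfolding e ey using uv ip by (simp add: algebra_simps mult_nonneg_nonneg)
    show "0 \<le> y \<and> y \<le> i \<and> 0 \<le> x*i - k*y \<and> 3*(x*i - k*y) \<le> y"
      using y1 y2 e1 e2 by linarith
  next
    assume h: "0 \<le> y \<and> y \<le> i \<and> 0 \<le> x*i - k*y \<and> 3*(x*i - k*y) \<le> y"
    define c where "c = real_of_int (x*i - k*y)"
    have c0: "real_of_int (3*(x*i - k*y)) \<le> real_of_int y" using h by (simp only: of_int_le_iff)
    have c00: "real_of_int 0 \<le> real_of_int (x*i - k*y)" using h by (simp only: of_int_le_iff)
    have c1: "0 \<le> c" "3 * c \<le> real_of_int y" unfolding c_def using c00 c0 by (simp only: of_int_0 of_int_mult of_int_numeral)+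
    have y0: "0 \<le> real_of_int y" "real_of_int y \<le> real_of_int i" using h by simp_all
    define v where "v = 3 * c / i"
    define u where "u = real_of_int y / i - v"
    have "0 \<le> v" unfolding v_def using c1 ip by simp
    moreover have "0 \<le> u" unfolding u_def v_def using c1 ip
      by (simp add: divide_simps)
    moreover have "u + v \<le> 1" unfolding u_def using y0 ip by (simp add: divide_simps)
    moreover have "real_of_int x = u * k + v * (k + 1/3)"
      unfolding u_def v_def c_def using ip by (simp add: field_simps)
    moreover have "real_of_int y = u * i + v * i"
      unfolding u_def using ip by (simp add: field_simps)
    ultimately show "(real_of_int x, real_of_int y) \<in> tri (of_int k) (of_int k + 1/3) i"
      unfolding hull by force
  qed
qed

lemma canon_iff:
  fixes k i :: int
  assumes "i > 1"
  shows "canonical (of_int k) (of_int k + 1/3) i \<longleftrightarrow>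
    (\<forall>x y. 0 < y \<and> y < i \<longrightarrow> \<not> (0 \<le> x*i - k*y \<and> 3*(x*i - k*y) \<le> y))"
proof
  assume c: "canonical (of_int k) (of_int k + 1/3) i"
  show "\<forall>x y. 0 < y \<and> y < i \<longrightarrow> \<not> (0 \<le> x*i - k*y \<and> 3*(x*i - k*y) \<le> y)"
  proof (intro allI impI notI)
    fix x y assume a: "0 < y \<and> y < i" and b: "0 \<le> x*i - k*y \<and> 3*(x*i - k*y) \<le> y"
    have "(real_of_int x, real_of_int y) \<in> tri (of_int k) (of_int k + 1/3) i"
      using tri_mem[OF assms] a b by simp
    moreover have "(x, y) \<noteq> (0, 0)" using a by simp
    ultimately have "y = i" using c unfolding canonical_def by blast
    with a show False by simp
  qed
next
  assume h: "\<forall>x y. 0 < y \<and> y < i \<longrightarrow> \<not> (0 \<le> x*i - k*y \<and> 3*(x*i - k*y) \<le> y)"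
  show "canonical (of_int k) (of_int k + 1/3) i"
    unfolding canonical_def
  proof (intro allI impI)
    fix x y :: int
    assume a: "(real_of_int x, real_of_int y) \<in> tri (of_int k) (of_int k + 1/3) i \<and> (x, y) \<noteq> (0, 0)"
    then have m: "0 \<le> y \<and> y \<le> i \<and> 0 \<le> x*i - k*y \<and> 3*(x*i - k*y) \<le> y"
      using tri_mem[OF assms] by blast
    show "y = i"
    proof (rule ccontr)
      assume ne: "y \<noteq> i"
      show False
      proof (cases "y = 0")
        case True
        then have "k*y = 0" by simp
        moreover have "0 \<le> x*i - k*y" "3*(x*i - k*y) \<le> y" using m by auto
        ultimately have "x * i = 0" using True by (smt (verit))
        then have "x = 0" using assms by simp
        then show False using a True by simp
      next
        case False
        then show False using h m ne by force
      qed
    qed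
  qed
qed

lemma C2_iff:
  fixes k i :: int
  shows "(odd i \<and> k mod i = ((i - 1) div 2) mod i) \<longleftrightarrow> i dvd 2*k+1"
proof
  assume "odd i \<and> k mod i = ((i - 1) div 2) mod i"
  then obtain m where im: "i = 2*m+1" and e: "k mod i = m mod i" by (auto elim: oddE)
  have "i dvd k - m" using e by (simp add: mod_eq_dvd_iff)
  then have "i dvd 2*(k - m)" by (rule dvd_mult)
  then have "i dvd 2*(k - m) + i" using dvd_add dvd_refl by blast
  moreover have "2*(k-m) + i = 2*k+1" using im by simp
  ultimately show "i dvd 2*k+1" by (simp only:)
next
  assume d: "i dvd 2*k+1"
  have oi: "odd i"
  proof
    assume "even i"
    then have "2 dvd 2*k+1" using d dvd_trans by blast
    then show False by simp
  qed
  then obtain m where im: "i = 2*m+1" by (auto elim: oddE)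
  have "k - m = (2*k+1)*(m+1) - i*(k+1)" using im by (simp add: algebra_simps)
  moreover have "i dvd (2*k+1)*(m+1) - i*(k+1)" using d by simp
  ultimately have "i dvd k - m" by simp
  then have "k mod i = m mod i" by (simp add: mod_eq_dvd_iff)
  moreover have "(i - 1) div 2 = m" using im by simp
  ultimately show "odd i \<and> k mod i = ((i - 1) div 2) mod i" using oi by simp
qed

theorem mainTheorem10:
  fixes k i :: int
  assumes "i > 1"
  shows "canonical (of_int k) (of_int k + 1/3) i \<longleftrightarrow>
           (i dvd (k + 1) \<or> (odd i \<and> k mod i = ((i - 1) div 2) mod i))"
  unfolding canon_iff[OF assms] C2_iff
proof
  assume h: "\<forall>x y. 0 < y \<and> y < i \<longrightarrow> \<not> (0 \<le> x*i - k*y \<and> 3*(x*i - k*y) \<le> y)"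
  show "i dvd k + 1 \<or> i dvd 2 * k + 1"
  proof (rule ccontr)
    assume nc: "\<not> (i dvd k + 1 \<or> i dvd 2 * k + 1)"
    show False
    proof (cases "gcd k i = 1")
      case False
      define g where "g = gcd k i"
      have gp: "g > 0" using assms unfolding g_def by simp
      have g1: "g > 1" using False gp unfolding g_def by linarith
      have gi: "g dvd i" "g dvd k" unfolding g_def by simp_all
      define y where "y = i div g"
      define x where "x = k div g"
      have yi: "y * g = i" unfolding y_def using gi by simp
      have xk: "x * g = k" unfolding x_def using gi by simp
      have r0: "x*i - k*y = 0" using yi xk by (metis mult.assoc mult.commute diff_self)
      have "g \<le> i" using gi(1) assms by (simp add: zdvd_imp_le)
      then have y0: "0 < y" unfolding y_def using gp by (simp add: pos_imp_zdiv_pos_iff)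
      have "y*1 < y*g" using mult_strict_left_mono[OF g1 y0] .
      then have "y < i" using yi by simp
      then show False using h[rule_format, of y x] r0 y0 by simp
    next
      case True
      obtain u v where uv: "u * k + v * i = 1" using bezout_int[of k i] True by metis
      define y where "y = (- u) mod i"
      have y0: "0 \<le> y" "y < i" unfolding y_def using assms by simp_all
      have dy: "i dvd k*y + 1"
      proof -
        have "y mod i = (-u) mod i" unfolding y_def by simp
        then have "i dvd y - (-u)" by (simp only: mod_eq_dvd_iff)
        then have "i dvd k*(y - (-u))" by simp
        then have "i dvd k*(y - (-u)) + v * i" by (rule dvd_add) simp
        moreover have "k*(y - (-u)) + v * i = k*y + 1" using uv by (simp add: algebra_simps)
        ultimately show ?thesis by (simp only:)
      qed
      have "y \<noteq> 0" using dy assms by (auto simp: zdvd1_eq)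
      moreover have "y \<noteq> 1" using dy nc by (auto simp: add.commute mult.commute)
      moreover have "y \<noteq> 2" using dy nc by (auto simp: add.commute mult.commute)
      ultimately have y3: "3 \<le> y" using y0 by linarith
      define x where "x = (k*y+1) div i"
      have "x * i = k*y + 1" unfolding x_def using dy by simp
      then have "x*i - k*y = 1" by simp
      then show False using h[rule_format, of y x] y0 y3 by simp
    qed
  qed
next
  assume c: "i dvd k + 1 \<or> i dvd 2 * k + 1"
  show "\<forall>x y. 0 < y \<and> y < i \<longrightarrow> \<not> (0 \<le> x*i - k*y \<and> 3*(x*i - k*y) \<le> y)"
  proof (intro allI impI notI)
    fix x y assume a: "0 < y \<and> y < i" and b: "0 \<le> x*i - k*y \<and> 3*(x*i - k*y) \<le> y"
    define r where "r = x*i - k*y"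
    have rr: "0 < y" "y < i" "0 \<le> r" "3*r \<le> y" using a b unfolding r_def by auto
    from c show False
    proof
      assume d: "i dvd k + 1"
      have "y - r = (k+1)*y - x*i" unfolding r_def by (simp add: algebra_simps)
      moreover have "i dvd (k+1)*y - x*i" using d by simp
      ultimately have "i dvd y - r" by simp
      moreover have "0 < y - r" "y - r < i" using rr by linarith+
      ultimately show False using zdvd_not_zless by blast
    next
      assume d: "i dvd 2*k + 1"
      have "y - 2*r = (2*k+1)*y - 2*x*i" unfolding r_def by (simp add: algebra_simps)
      moreover have "i dvd (2*k+1)*y - 2*x*i" using d by simp
      ultimately have "i dvd y - 2*r" by simp
      moreover have "0 < y - 2*r" "y - 2*r < i" using rr by linarith+
      ultimately show False using zdvd_not_zless by blast
    qed
  qed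
qed

end
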